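(* Let $(X^{(t)})_{t \in \mathbb{N}}$ be a sequence of real-valued random variables with bounded range, and let $(Y^{(t)})_{t \in \mathbb{N}}$ be a sequence of real-valued random variables that are zero-mean, range-bounded, and independent and identically distributed. Suppose the sequences $(X^{(t)})_{t \in \mathbb{N}}$ and $(Y^{(t)})_{t \in \mathbb{N}}$ are independent of each other. Define $Z^{(t)} \coloneqq X^{(t)} Y^{(t)}$. Then \[ \lim_{k \to \infty} \frac{1}{k+1}\sum_{t=0}^{k} Z^{(t)} = 0 \quad \text{almost surely.} \]
   Context: All random variables are defined on a common probability space. "Bounded range" means the random variables take values in a bounded subset of $\mathbb{R}$. *)

theory Defs
  imports "HOL-Probability.Probability"
begin

end

theory Submission
  imports Defs "HOL-Library.Discrete_Functions"
begin

lemma det_interp: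
  fixes s :: "nat \<Rightarrow> real"
  assumes step: "\<And>k. \<bar>s (Suc k) - s k\<bar> \<le> K"
    and sub: "(\<lambda>r. s (r^2 - 1) / real (r^2)) \<longlonglongrightarrow> 0"
  shows "(\<lambda>k. s k / real (k+1)) \<longlonglongrightarrow> 0"
proof -
  have K0: "0 \<le> K" using step[of 0] by linarith
  have diff: "\<bar>s (j + d) - s j\<bar> \<le> K * real d" for j d
  proof (induction d)
    case 0 then show ?case by simp
  next
    case (Suc d)
    have "\<bar>s (j + Suc d) - s j\<bar> \<le> \<bar>s (Suc (j + d)) - s (j + d)\<bar> + \<bar>s (j + d) - s j\<bar>" by simp
    also have "\<dots> \<le> K + K * real d" using step[of "j+d"] Suc by linarith
    finally show ?case by (simp add: algebra_simps)
  qed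
  define g where "g k = floor_sqrt (k+1)" for k
  have g1: "1 \<le> g k" for k unfolding g_def by (simp add: le_floor_sqrtI)
  have g2: "(g k)^2 \<le> k + 1" for k unfolding g_def by simp
  have g3: "k + 1 < (Suc (g k))^2" for k unfolding g_def by (rule Suc_floor_sqrt_power2_gt)
  have glim: "filterlim g at_top sequentially"
    unfolding filterlim_at_top eventually_sequentially
  proof (intro allI)
    fix Z :: nat
    show "\<exists>N. \<forall>k\<ge>N. Z \<le> g k" unfolding g_def
      by (intro exI[of _ "Z^2"]) (auto intro!: le_floor_sqrtI)
  qed
  define b where "b r = \<bar>s (r^2 - 1) / real (r^2)\<bar> + 2 * K / real r" for r
  have b0: "b \<longlonglongrightarrow> 0"
  proof -
    have "(\<lambda>r. \<bar>s (r^2 - 1) / real (r^2)\<bar>) \<longlonglongrightarrow> 0"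
      using tendsto_rabs_zero[OF sub] .
    moreover have "(\<lambda>r. 2 * K / real r) \<longlonglongrightarrow> 0"
      by (intro tendsto_divide_0[OF tendsto_const] filterlim_at_top_imp_at_infinity filterlim_real_sequentially)
    ultimately show ?thesis unfolding b_def using tendsto_add by fastforce
  qed
  have bg: "(\<lambda>k. b (g k)) \<longlonglongrightarrow> 0" using filterlim_compose[OF b0 glim] by simp
  have bound: "norm (s k / real (k+1)) \<le> b (g k)" for k
  proof -
    define r where "r = g k"
    have r1: "1 \<le> r" and r2: "r^2 \<le> k+1" and r3: "k+1 < (Suc r)^2" using g1 g2 g3 r_def by auto
    define j where "j = r^2 - 1"
    have jk: "j \<le> k" using r2 j_def by simp
    have dd: "k - j \<le> 2 * r" using r3 r1 j_def by (simp add: power2_eq_square)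
    have "\<bar>s k - s j\<bar> \<le> K * real (k - j)" using diff[of j "k - j"] jk by simp
    also have "\<dots> \<le> K * (2 * real r)" using dd K0 by (intro mult_left_mono) auto
    finally have e1: "\<bar>s k - s j\<bar> \<le> 2 * K * real r" by simp
    have rpos: "0 < real (r^2)" using r1 by simp
    have rr: "real (r^2) \<le> real (k+1)" using r2 by linarith
    have "\<bar>s k\<bar> / real (k+1) \<le> \<bar>s j\<bar> / real (k+1) + 2 * K * real r / real (k+1)"
      using e1 by (simp add: add_divide_distrib[symmetric] divide_right_mono)
    also have "\<bar>s j\<bar> / real (k+1) \<le> \<bar>s j\<bar> / real (r^2)"
      using rpos rr by (intro divide_left_mono) auto
    also have "2 * K * real r / real (k+1) \<le> 2 * K * real r / real (r^2)"
      using rpos rr K0 by (intro divide_left_mono) auto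
    also have "2 * K * real r / real (r^2) = 2 * K / real r"
      using r1 by (simp add: power2_eq_square)
    finally have "\<bar>s k\<bar> / real (k+1) \<le> \<bar>s j\<bar> / real (r^2) + 2 * K / real r" by simp
    then show ?thesis unfolding b_def r_def[symmetric] j_def using rpos by (simp add: abs_divide)
  qed
  show ?thesis by (rule Lim_null_comparison[OF _ bg]) (use bound in \<open>intro always_eventually allI\<close>)
qed

lemma (in prob_space) AE_summable_from_expectations:
  fixes f :: "nat \<Rightarrow> 'a \<Rightarrow> real"
  assumes meas[measurable]: "\<And>i. f i \<in> borel_measurable M"
    and nn: "\<And>i x. 0 \<le> f i x" and int: "\<And>i. integrable M (f i)"
    and sm: "summable (\<lambda>i. expectation (f i))"
  shows "AE x in M. summable (\<lambda>i. f i x)"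
proof -
  have "(\<integral>\<^sup>+x. (\<Sum>i. ennreal (f i x)) \<partial>M) = (\<Sum>i. \<integral>\<^sup>+x. ennreal (f i x) \<partial>M)"
    by (intro nn_integral_suminf) auto
  also have "\<dots> = (\<Sum>i. ennreal (expectation (f i)))"
    by (intro arg_cong[where f=suminf] ext nn_integral_eq_integral int) (auto simp: nn)
  also have "\<dots> \<noteq> top"
    by (intro ennreal_suminf_neq_top sm integral_nonneg_AE) (auto simp: nn)
  finally have "AE x in M. (\<Sum>i. ennreal (f i x)) \<noteq> \<infinity>"
    by (intro nn_integral_PInf_AE) auto
  then show ?thesis
    by eventually_elim (auto intro: summable_suminf_not_top nn)
qed


theorem mainTheorem1:
  fixes M :: "'a measure" and X Y :: "nat \<Rightarrow> 'a \<Rightarrow> real"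
  assumes "prob_space M"
    and X_rv: "\<And>t. X t \<in> borel_measurable M"
    and X_bdd: "\<exists>B. \<forall>t. \<forall>\<omega>\<in>space M. \<bar>X t \<omega>\<bar> \<le> B"
    and Y_rv: "\<And>t. Y t \<in> borel_measurable M"
    and Y_bdd: "\<exists>B. \<forall>t. \<forall>\<omega>\<in>space M. \<bar>Y t \<omega>\<bar> \<le> B"
    and Y_indep: "prob_space.indep_vars M (\<lambda>_. borel) Y UNIV"
    and Y_ident: "\<And>t. distr M borel (Y t) = distr M borel (Y 0)"
    and Y_mean: "\<And>t. prob_space.expectation M (Y t) = 0"
    and XY_indep: "prob_space.indep_var M
        (Pi\<^sub>M UNIV (\<lambda>_. borel)) (\<lambda>\<omega> t. X t \<omega>)
        (Pi\<^sub>M UNIV (\<lambda>_. borel)) (\<lambda>\<omega> t. Y t \<omega>)"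
  shows "AE \<omega> in M.
    (\<lambda>k. (\<Sum>t\<le>k. X t \<omega> * Y t \<omega>) / real (k + 1)) \<longlonglongrightarrow> 0"
proof -
  interpret prob_space M by fact
  obtain Bx where Bx: "\<And>t \<omega>. \<omega> \<in> space M \<Longrightarrow> \<bar>X t \<omega>\<bar> \<le> Bx" using X_bdd by blast
  obtain By where By: "\<And>t \<omega>. \<omega> \<in> space M \<Longrightarrow> \<bar>Y t \<omega>\<bar> \<le> By" using Y_bdd by blast
  define K where "K = Bx * By"
  define Z where "Z t \<omega> = X t \<omega> * Y t \<omega>" for t \<omega>
  have Z_rv[measurable]: "Z t \<in> borel_measurable M" for t unfolding Z_def using X_rv Y_rv by measurable
  note [measurable] = X_rv Y_rv
  have ZK: "\<bar>Z t \<omega>\<bar> \<le> K" if "\<omega> \<in> space M" for t \<omega>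
    unfolding Z_def K_def abs_mult using Bx[OF that] By[OF that]
    by (meson abs_ge_zero mult_mono order_trans)
  have K0: "0 \<le> K" using ZK[of "SOME x. x \<in> space M"] not_empty
    by (metis abs_ge_zero order_trans some_in_eq)
  have intZZ: "integrable M (\<lambda>\<omega>. Z a \<omega> * Z b \<omega>)" for a b
  proof (rule integrable_const_bound[where B="K*K"])
    show "AE x in M. norm (Z a x * Z b x) \<le> K * K"
      using ZK by (intro AE_I2) (simp add: abs_mult mult_mono K0)
  qed simp
  have intY: "integrable M (Y t)" for t
    by (rule integrable_const_bound[where B=By]) (use By in auto)
  have EZZ: "expectation (\<lambda>\<omega>. Z a \<omega> * Z b \<omega>) = 0" if ab: "a \<noteq> b" for a b
  proof -
    have m: "(\<lambda>f. f a * f b) \<in> measurable (Pi\<^sub>M UNIV (\<lambda>_. borel)) (borel :: real measure)"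
      by measurable
    have ind: "indep_var borel (\<lambda>\<omega>. X a \<omega> * X b \<omega>) borel (\<lambda>\<omega>. Y a \<omega> * Y b \<omega>)"
      using indep_var_compose[OF XY_indep m m] by (simp add: comp_def)
    have i1: "integrable M (\<lambda>\<omega>. X a \<omega> * X b \<omega>)"
    proof (rule integrable_const_bound[where B="Bx*Bx"])
      show "AE x in M. norm (X a x * X b x) \<le> Bx * Bx"
        using Bx by (intro AE_I2) (simp add: abs_mult mult_mono' mult_mono order_trans[OF abs_ge_zero])
    qed simp
    have i2: "integrable M (\<lambda>\<omega>. Y a \<omega> * Y b \<omega>)"
    proof (rule integrable_const_bound[where B="By*By"])
      show "AE x in M. norm (Y a x * Y b x) \<le> By * By"
        using By by (intro AE_I2) (simp add: abs_mult mult_mono' mult_mono order_trans[OF abs_ge_zero])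
    qed simp
    have "expectation (\<lambda>\<omega>. Z a \<omega> * Z b \<omega>) = expectation (\<lambda>\<omega>. (X a \<omega> * X b \<omega>) * (Y a \<omega> * Y b \<omega>))"
      unfolding Z_def by (simp add: ac_simps)
    also have "\<dots> = expectation (\<lambda>\<omega>. X a \<omega> * X b \<omega>) * expectation (\<lambda>\<omega>. Y a \<omega> * Y b \<omega>)"
      by (rule indep_var_lebesgue_integral[OF ind i1 i2])
    also have "expectation (\<lambda>\<omega>. Y a \<omega> * Y b \<omega>) = expectation (\<lambda>\<omega>. \<Prod>i\<in>{a,b}. Y i \<omega>)"
      using ab by simp
    also have "\<dots> = (\<Prod>i\<in>{a,b}. expectation (Y i))"
      by (rule indep_vars_lebesgue_integral) (auto intro: indep_vars_subset[OF Y_indep] intY)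
    also have "\<dots> = 0" using ab Y_mean by simp
    finally show ?thesis by simp
  qed
  define S where "S n \<omega> = (\<Sum>t\<le>n. Z t \<omega>)" for n \<omega>
  have S_rv[measurable]: "S n \<in> borel_measurable M" for n unfolding S_def by measurable
  have ES2: "expectation (\<lambda>\<omega>. (S n \<omega>)^2) \<le> real (n+1) * K^2" for n
  proof -
    have "expectation (\<lambda>\<omega>. (S n \<omega>)^2) = expectation (\<lambda>\<omega>. \<Sum>a\<le>n. \<Sum>b\<le>n. Z a \<omega> * Z b \<omega>)"
      unfolding S_def power2_eq_square sum_product ..
    also have "\<dots> = (\<Sum>a\<le>n. \<Sum>b\<le>n. expectation (\<lambda>\<omega>. Z a \<omega> * Z b \<omega>))"
      by (simp add: intZZ integral_sum integrable_sum)
    also have "\<dots> = (\<Sum>a\<le>n. expectation (\<lambda>\<omega>. Z a \<omega> * Z a \<omega>))"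
    proof (rule sum.cong[OF refl])
      fix a assume a: "a \<in> {..n}"
      have "(\<Sum>b\<le>n. expectation (\<lambda>\<omega>. Z a \<omega> * Z b \<omega>)) =
            (\<Sum>b\<le>n. if a = b then expectation (\<lambda>\<omega>. Z a \<omega> * Z a \<omega>) else 0)"
        by (rule sum.cong) (auto simp: EZZ)
      also have "\<dots> = expectation (\<lambda>\<omega>. Z a \<omega> * Z a \<omega>)" using a by simp
      finally show "(\<Sum>b\<le>n. expectation (\<lambda>\<omega>. Z a \<omega> * Z b \<omega>)) = expectation (\<lambda>\<omega>. Z a \<omega> * Z a \<omega>)" .
    qed
    also have "\<dots> \<le> (\<Sum>a\<le>n. K^2)"
    proof (rule sum_mono)
      fix a
      have "expectation (\<lambda>\<omega>. Z a \<omega> * Z a \<omega>) \<le> expectation (\<lambda>\<omega>. K^2)"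
      proof (rule integral_mono[OF intZZ])
        fix \<omega> assume w: "\<omega> \<in> space M"
        have "\<bar>Z a \<omega>\<bar> * \<bar>Z a \<omega>\<bar> \<le> K * K" by (rule mult_mono[OF ZK[OF w] ZK[OF w]]) (auto simp: K0)
        moreover have "Z a \<omega> * Z a \<omega> = \<bar>Z a \<omega>\<bar> * \<bar>Z a \<omega>\<bar>" by (rule abs_mult_self_eq[symmetric])
        ultimately show "Z a \<omega> * Z a \<omega> \<le> K^2" unfolding power2_eq_square by linarith
      qed simp
      then show "expectation (\<lambda>\<omega>. Z a \<omega> * Z a \<omega>) \<le> K^2" by (simp add: prob_space)
    qed
    also have "\<dots> = real (n+1) * K^2" by simp
    finally show ?thesis .
  qed
  have intS2: "integrable M (\<lambda>\<omega>. (S n \<omega>)^2)" for n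
    unfolding S_def power2_eq_square sum_product by (simp add: intZZ integrable_sum)
  define f where "f r \<omega> = (S (r^2 - 1) \<omega> / real (r^2))^2" for r \<omega>
  have f_rv[measurable]: "f r \<in> borel_measurable M" for r unfolding f_def by measurable
  have intf: "integrable M (f r)" for r
    unfolding f_def power_divide using intS2 by simp
  have Ef: "expectation (f r) \<le> K^2 * inverse (real r ^ 2)" for r
  proof (cases "r = 0")
    case True then show ?thesis unfolding f_def by simp
  next
    case False
    have "expectation (f r) = expectation (\<lambda>\<omega>. (S (r^2 - 1) \<omega>)^2) / (real (r^2))^2"
      unfolding f_def power_divide by simp
    also have "\<dots> \<le> real (r^2 - 1 + 1) * K^2 / (real (r^2))^2"
      by (intro divide_right_mono ES2) simp
    also have "real (r^2 - 1 + 1) = real r ^ 2" using False by simp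
    also have "real r ^ 2 * K^2 / (real (r^2))^2 = K^2 * inverse (real r ^ 2)"
      using False by (simp add: power2_eq_square field_simps)
    finally show ?thesis .
  qed
  have sumf: "summable (\<lambda>r. expectation (f r))"
  proof (rule summable_comparison_test)
    show "\<exists>N. \<forall>n\<ge>N. norm (expectation (f n)) \<le> K^2 * inverse (real n ^ 2)"
      using Ef by (auto simp: f_def intro!: integral_nonneg_AE)
    show "summable (\<lambda>n. K^2 * inverse (real n ^ 2))"
      by (intro summable_mult inverse_power_summable) simp
  qed
  have "AE \<omega> in M. summable (\<lambda>r. f r \<omega>)"
    by (rule AE_summable_from_expectations[OF f_rv _ intf sumf]) (simp add: f_def)
  then show ?thesis
  proof (rule AE_mp[OF AE_conjI[OF AE_space]], intro AE_I2 impI, elim conjE)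
    fix \<omega> assume w: "\<omega> \<in> space M" and sm: "summable (\<lambda>r. f r \<omega>)"
    have "(\<lambda>r. f r \<omega>) \<longlonglongrightarrow> 0" by (rule summable_LIMSEQ_zero[OF sm])
    then have "(\<lambda>r. sqrt (f r \<omega>)) \<longlonglongrightarrow> 0" using tendsto_real_sqrt by fastforce
    then have "(\<lambda>r. \<bar>S (r^2 - 1) \<omega> / real (r^2)\<bar>) \<longlonglongrightarrow> 0" by (simp add: f_def)
    then have sub: "(\<lambda>r. S (r^2 - 1) \<omega> / real (r^2)) \<longlonglongrightarrow> 0"
      by (rule tendsto_rabs_zero_cancel)
    have step: "\<bar>S (Suc k) \<omega> - S k \<omega>\<bar> \<le> K" for k
      using ZK[OF w, of "Suc k"] by (simp add: S_def)
    have "(\<lambda>k. S k \<omega> / real (k+1)) \<longlonglongrightarrow> 0" by (rule det_interp[OF step sub])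
    then show "(\<lambda>k. (\<Sum>t\<le>k. X t \<omega> * Y t \<omega>) / real (k + 1)) \<longlonglongrightarrow> 0"
      by (simp add: S_def Z_def)
  qed
qed

end
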